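(* Let $(\frac pq,\frac rs)$ be a Farey pair of order $n$ with $q\ge 2$, let $d=\lfloor n/q\rfloor$, let $\alpha\in(0,1)$, $\beta=1-\alpha$, and let $\phi_\alpha(t)=(t^q-\beta)^d-\alpha^d t^{qd-s}$. If $t_0$ is a multiple root of $\phi_\alpha$, then $t_0^s$ is a real number and $t_0^s\ne 1$.
   Context: $\mathcal{F}_n=\{p/q:0\le p<q\le n,\ \gcd(p,q)=1\}$. A Farey pair of order $n$ is a pair $(\frac pq,\frac rs)$ of elements of $\mathcal{F}_n$ with $\frac pq<\frac rs$ and no element of $\mathcal{F}_n$ strictly between them. $\phi_\alpha$ (the Ito rational function of the pair) is regarded as a rational function of the complex variable $t$. *)

theory Defs
  imports "HOL-Complex_Analysis.Complex_Analysis"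
begin

definition in_farey :: "nat \<Rightarrow> nat \<Rightarrow> nat \<Rightarrow> bool" where
  "in_farey n a b \<longleftrightarrow> a < b \<and> b \<le> n \<and> coprime a b"

definition farey_pair :: "nat \<Rightarrow> nat \<Rightarrow> nat \<Rightarrow> nat \<Rightarrow> nat \<Rightarrow> bool" where
  "farey_pair n p q r s \<longleftrightarrow>
     in_farey n p q \<and> in_farey n r s \<and> real p / real q < real r / real s \<and>
     \<not> (\<exists>a b. in_farey n a b \<and> real p / real q < real a / real b
                 \<and> real a / real b < real r / real s)"

definition ito_phi :: "real \<Rightarrow> nat \<Rightarrow> nat \<Rightarrow> nat \<Rightarrow> complex \<Rightarrow> complex" where
  "ito_phi \<alpha> q d s t =
     (t ^ q - complex_of_real (1 - \<alpha>)) ^ d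
     - complex_of_real \<alpha> ^ d * t powi (int (q * d) - int s)"

end

theory Submission
  imports Defs
begin

theorem lemma4p1:
  fixes n p q r s :: nat and \<alpha> :: real and t0 :: complex
  assumes "farey_pair n p q r s"
    and "q \<ge> 2"
    and "0 < \<alpha>" and "\<alpha> < 1"
    and "t0 \<noteq> 0"
    and "ito_phi \<alpha> q (n div q) s t0 = 0"
    and "deriv (ito_phi \<alpha> q (n div q) s) t0 = 0"
  shows "t0 ^ s \<in> \<real> \<and> t0 ^ s \<noteq> 1"
proof -
  define d where "d = n div q"
  define m where "m = int (q * d) - int s"
  define \<beta> where "\<beta> = 1 - \<alpha>"
  define u where "u = t0 ^ q - complex_of_real \<beta>"
  define P where "P = t0 powi m"
  have t: "t0 \<noteq> 0" by fact
  have sn: "s \<le> n" "0 < s" "q \<le> n" using assms(1) by (auto simp: farey_pair_def in_farey_def)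
  have d1: "d \<ge> 1" using sn assms(2) by (simp add: d_def div_greater_zero_iff Suc_le_eq)
  have nq: "n < q * d + q"
  proof -
    have "n = q * (n div q) + n mod q" by simp
    moreover have "n mod q < q" using assms(2) by simp
    ultimately show ?thesis unfolding d_def by linarith
  qed
  have Pnz: "P \<noteq> 0" using t by (simp add: P_def)
  have phi: "u ^ d = complex_of_real \<alpha> ^ d * P"
    using assms(6) by (simp add: ito_phi_def u_def P_def m_def \<beta>_def d_def)
  have der: "((ito_phi \<alpha> q d s) has_field_derivative
      (of_nat d * ((of_nat q * t0 ^ (q - 1)) * u ^ (d - Suc 0)) - complex_of_real \<alpha> ^ d * (of_int m * t0 powi (m - 1) * 1))) (at t0)"
    unfolding ito_phi_def u_def \<beta>_def m_def
    by (auto intro!: derivative_eq_intros simp: t)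
  have D0: "of_nat d * ((of_nat q * t0 ^ (q - 1)) * u ^ (d - Suc 0)) - complex_of_real \<alpha> ^ d * (of_int m * t0 powi (m - 1)) = 0"
  proof -
    have "deriv (ito_phi \<alpha> q d s) t0 = 0" using assms(7) unfolding d_def .
    thus ?thesis using DERIV_imp_deriv[OF der] by (simp only: mult_1_right)
  qed
  have e1: "t0 ^ (q - 1) * t0 = t0 ^ q" using assms(2)
    by (cases q) (auto simp: mult.commute)
  have e2: "t0 powi (m - 1) * t0 = P" unfolding P_def using t
    by (simp add: power_int_diff)
  have e3: "u ^ (d - Suc 0) * u = u ^ d" using d1
    by (cases d) (auto simp: mult.commute)
  have "(of_nat d * ((of_nat q * t0 ^ (q - 1)) * u ^ (d - Suc 0)) - complex_of_real \<alpha> ^ d * (of_int m * t0 powi (m - 1))) * (t0 * u) = 0"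
    using D0 by simp
  hence "of_nat d * of_nat q * (t0 ^ (q - 1) * t0) * (u ^ (d - Suc 0) * u) - complex_of_real \<alpha> ^ d * of_int m * (t0 powi (m - 1) * t0) * u = 0"
    by (simp add: algebra_simps)
  hence "of_nat d * of_nat q * t0 ^ q * (complex_of_real \<alpha> ^ d * P) - complex_of_real \<alpha> ^ d * of_int m * P * u = 0"
    using e1 e2 e3 phi by simp
  hence "(complex_of_real \<alpha> ^ d * P) * (of_nat d * of_nat q * t0 ^ q - of_int m * u) = 0"
    by (simp add: algebra_simps)
  moreover have "complex_of_real \<alpha> ^ d * P \<noteq> 0" using Pnz assms(3) by simp
  ultimately have key: "of_nat d * of_nat q * t0 ^ q = of_int m * u"
    by (metis mult_eq_0_iff right_minus_eq)
  have tq: "t0 ^ q = complex_of_real (- of_int m * \<beta> / real s)"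
  proof -
    have "of_nat d * of_nat q * t0 ^ q = of_int m * (t0 ^ q - complex_of_real \<beta>)"
      using key u_def by simp
    hence "(of_nat (q * d) - of_int m) * t0 ^ q = - of_int m * complex_of_real \<beta>"
      by (simp add: algebra_simps)
    moreover have "of_nat (q * d) - (of_int m :: complex) = of_nat s" by (simp add: m_def)
    ultimately have "of_nat s * t0 ^ q = - of_int m * complex_of_real \<beta>" by simp
    thus ?thesis using sn by (simp add: field_simps)
  qed
  have uval: "u = complex_of_real (- real (q * d) * \<beta> / real s)"
  proof -
    have "u = complex_of_real (- of_int m * \<beta> / real s - \<beta>)" using tq u_def by simp
    also have "- of_int m * \<beta> / real s - \<beta> = - real (q * d) * \<beta> / real s"
      using sn by (simp add: m_def field_simps)
    finally show ?thesis .
  qed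
  have Pval: "P = u ^ d / complex_of_real \<alpha> ^ d" using phi assms(3) by simp
  have sum: "P * t0 ^ s = t0 ^ (q * d)"
  proof -
    have "t0 powi (m + int s) = P * t0 powi (int s)" unfolding P_def using t by (simp add: power_int_add)
    moreover have "m + int s = int (q * d)" by (simp add: m_def)
    ultimately show ?thesis by (metis power_int_of_nat)
  qed
  have tqd: "t0 ^ (q * d) = (t0 ^ q) ^ d" by (simp add: power_mult)
  have real1: "t0 ^ s = t0 ^ (q * d) / P" using sum Pnz by (simp add: field_simps)
  have R: "t0 ^ s \<in> \<real>"
    unfolding real1 tqd Pval tq uval by (simp del: of_real_power add: of_real_power[symmetric] of_real_divide[symmetric])
  have N: "t0 ^ s \<noteq> 1"
  proof
    assume h: "t0 ^ s = 1"
    hence "P = (t0 ^ q) ^ d" using sum tqd by simp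
    hence "u ^ d = complex_of_real \<alpha> ^ d * (t0 ^ q) ^ d" using phi by simp
    hence "norm (u ^ d) = norm (complex_of_real \<alpha> ^ d * (t0 ^ q) ^ d)" by (rule arg_cong)
    hence pw: "norm u ^ d = (\<alpha> * norm (t0 ^ q)) ^ d"
      using assms(3) by (simp add: norm_mult norm_power power_mult_distrib)
    have "norm u = \<alpha> * norm (t0 ^ q)"
      by (rule power_eq_imp_eq_base[OF pw]) (use d1 assms(3) in auto)
    hence "\<bar>- real (q * d) * \<beta> / real s\<bar> = \<alpha> * \<bar>- of_int m * \<beta> / real s\<bar>"
      by (simp only: uval tq norm_of_real)
    moreover have bp: "\<beta> > 0" using assms(4) by (simp add: \<beta>_def)
    ultimately have "real (q * d) * \<beta> / real s = \<alpha> * (\<bar>of_int m\<bar> * \<beta> / real s)"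
      using sn by (simp add: abs_mult abs_divide abs_minus_cancel)
    hence eq: "real (q * d) = \<alpha> * \<bar>of_int m\<bar>"
      using bp sn by (simp add: field_simps)
    have qqd: "q \<le> q * d" using d1 by simp
    have "\<bar>m\<bar> \<le> int (q * d)" using nq sn qqd unfolding m_def by linarith
    hence mb: "\<bar>real_of_int m\<bar> \<le> real (q * d)" by linarith
    have qp: "real (q * d) > 0" using d1 assms(2) by simp
    have "\<alpha> * \<bar>of_int m\<bar> \<le> \<alpha> * real (q * d)"
      using mult_left_mono[OF mb] assms(3) by simp
    also have "\<dots> < 1 * real (q * d)" using qp assms(4) by (intro mult_strict_right_mono)
    also have "\<dots> = real (q * d)" by simp
    finally have "\<alpha> * \<bar>of_int m\<bar> < real (q * d)" .
    with eq show False by simp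
  qed
  show ?thesis using R N by simp
qed

end
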